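(* Let $V_\pm$ be real symmetric $n\times n$ matrices with all eigenvalues nonnegative, and let $\nu_{\min}\ge 0$ be the smallest eigenvalue of $V_+$ and $V_-$. For any $\lambda<\nu_{\min}$, the spectrum of $$\tilde{\mathcal W}^-(\lambda):=-(R^-+iS^-(\lambda))(R^--iS^-(\lambda))^{-1}(R^+-iS^+(\lambda))(R^++iS^+(\lambda))^{-1}$$ does not include $-1$.
   Context: Let $\nu_1^\pm\le\dots\le\nu_n^\pm$ be the eigenvalues of $V_\pm$ with orthonormal eigenvectors $r_j^\pm$. For $\lambda<\nu_{\min}$, $\mu^\pm_j(\lambda)=-\sqrt{\nu^\pm_{n+1-j}-\lambda}$ and $\mu^\pm_{n+j}(\lambda)=\sqrt{\nu_j^\pm-\lambda}$, $j=1,\dots,n$. $R^-=(r^-_1\ r^-_2\ \cdots\ r^-_n)$, $S^-(\lambda)=(\mu^-_{n+1}(\lambda)r^-_1\ \cdots\ \mu^-_{2n}(\lambda)r^-_n)$, $R^+=(r^+_n\ r^+_{n-1}\ \cdots\ r^+_1)$, $S^+(\lambda)=(\mu^+_1(\lambda)r^+_n\ \mu^+_2(\lambda)r^+_{n-1}\ \cdots\ \mu^+_n(\lambda)r^+_1)$ (columns listed). (In this setting the paper works with $V_\pm=\lim_{x\to\pm\infty}V(x)$ for a continuous symmetric potential $V$ satisfying an integrability condition, but the claim involves only $V_\pm$.) *)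

theory Defs
  imports "Jordan_Normal_Form.Gauss_Jordan_Elimination" "Jordan_Normal_Form.Char_Poly"
begin

(* Inverse of a square matrix over a field (the matrices inverted below are invertible). *)
definition minv :: "'a :: field mat \<Rightarrow> 'a mat" where
  "minv A = the (mat_inverse A)"

(* Eigenvalue data is 1-indexed as in the paper: nu j, r j for j = 1..n.
   mu nu n lam j for j = 1..2n:
     mu_j     = - sqrt(nu_{n+1-j} - lam),  j = 1..n
     mu_{n+j} =   sqrt(nu_j - lam),        j = 1..n *)
definition mu :: "(nat \<Rightarrow> real) \<Rightarrow> nat \<Rightarrow> real \<Rightarrow> nat \<Rightarrow> real" where
  "mu nu n lam j = (if j \<le> n then - sqrt (nu (n + 1 - j) - lam) else sqrt (nu (j - n) - lam))"

(* Matrix column index c (0-based) corresponds to paper column c+1. *)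
definition Rminus :: "nat \<Rightarrow> (nat \<Rightarrow> real vec) \<Rightarrow> complex mat" where
  "Rminus n r = mat n n (\<lambda>(i,c). complex_of_real (r (c+1) $ i))"

definition Sminus :: "nat \<Rightarrow> (nat \<Rightarrow> real) \<Rightarrow> (nat \<Rightarrow> real vec) \<Rightarrow> real \<Rightarrow> complex mat" where
  "Sminus n nu r lam = mat n n (\<lambda>(i,c). complex_of_real (mu nu n lam (n + (c+1)) * r (c+1) $ i))"

definition Rplus :: "nat \<Rightarrow> (nat \<Rightarrow> real vec) \<Rightarrow> complex mat" where
  "Rplus n r = mat n n (\<lambda>(i,c). complex_of_real (r (n - c) $ i))"

definition Splus :: "nat \<Rightarrow> (nat \<Rightarrow> real) \<Rightarrow> (nat \<Rightarrow> real vec) \<Rightarrow> real \<Rightarrow> complex mat" where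
  "Splus n nu r lam = mat n n (\<lambda>(i,c). complex_of_real (mu nu n lam (c+1) * r (n - c) $ i))"

definition Wtilde_minus ::
  "nat \<Rightarrow> (nat \<Rightarrow> real) \<Rightarrow> (nat \<Rightarrow> real vec) \<Rightarrow> (nat \<Rightarrow> real) \<Rightarrow> (nat \<Rightarrow> real vec) \<Rightarrow> real \<Rightarrow> complex mat" where
  "Wtilde_minus n num rm nup rp lam =
     - ((Rminus n rm + \<i> \<cdot>\<^sub>m Sminus n num rm lam)
        * minv (Rminus n rm - \<i> \<cdot>\<^sub>m Sminus n num rm lam)
        * (Rplus n rp - \<i> \<cdot>\<^sub>m Splus n nup rp lam)
        * minv (Rplus n rp + \<i> \<cdot>\<^sub>m Splus n nup rp lam))"

definition ordered_eigensystem :: "nat \<Rightarrow> real mat \<Rightarrow> (nat \<Rightarrow> real) \<Rightarrow> (nat \<Rightarrow> real vec) \<Rightarrow> bool" where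
  "ordered_eigensystem n V nu r \<longleftrightarrow>
     (\<forall>j\<in>{1..n}. r j \<in> carrier_vec n \<and> V *\<^sub>v r j = nu j \<cdot>\<^sub>v r j) \<and>
     (\<forall>j\<in>{1..n}. \<forall>k\<in>{1..n}. r j \<bullet> r k = (if j = k then 1 else 0)) \<and>
     (\<forall>j\<in>{1..n}. \<forall>k\<in>{1..n}. j \<le> k \<longrightarrow> nu j \<le> nu k)"

end

theory Submission
  imports Defs
begin

definition Mq :: "nat \<Rightarrow> (nat \<Rightarrow> real vec) \<Rightarrow> (nat \<Rightarrow> complex) \<Rightarrow> complex mat" where
  "Mq n q g = mat n n (\<lambda>(i,c). complex_of_real (q c $ i) * g c)"

definition orth :: "nat \<Rightarrow> (nat \<Rightarrow> real vec) \<Rightarrow> bool" where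
  "orth n q \<longleftrightarrow> (\<forall>c<n. q c \<in> carrier_vec n) \<and> (\<forall>c<n. \<forall>c'<n. q c \<bullet> q c' = (if c = c' then 1 else 0))"

lemma orth_sum:
  assumes "orth n q" "a < n" "b < n"
  shows "(\<Sum>i<n. q a $ i * q b $ i) = (if a = b then 1 else 0)"
proof -
  have "dim_vec (q b) = n" using assms unfolding orth_def by auto
  then have "q a \<bullet> q b = (\<Sum>i<n. q a $ i * q b $ i)" unfolding scalar_prod_def
    by (simp add: lessThan_atLeast0)
  then show ?thesis using assms unfolding orth_def by auto
qed

lemma orth_sum_c:
  assumes "orth n q" "a < n" "b < n"
  shows "(\<Sum>i<n. complex_of_real (q a $ i) * complex_of_real (q b $ i)) = (if a = b then 1 else 0)"
proof -
  have "(\<Sum>i<n. complex_of_real (q a $ i) * complex_of_real (q b $ i))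
     = complex_of_real (\<Sum>i<n. q a $ i * q b $ i)" by simp
  then show ?thesis using orth_sum[OF assms] by simp
qed

lemma Mq_carrier[simp]: "Mq n q g \<in> carrier_mat n n" unfolding Mq_def by auto

lemma Mq_inv:
  assumes o: "orth n q" and g: "\<forall>c<n. g c \<noteq> 0"
  shows "Mq n q g * minv (Mq n q g) = 1\<^sub>m n \<and> minv (Mq n q g) \<in> carrier_mat n n"
proof -
  define L where "L = mat n n (\<lambda>(a,i). complex_of_real (q a $ i) / g a)"
  have Lc: "L \<in> carrier_mat n n" unfolding L_def by auto
  have LM: "L * Mq n q g = 1\<^sub>m n"
  proof (rule eq_matI)
    fix a b assume ab: "a < dim_row (1\<^sub>m n :: complex mat)" "b < dim_col (1\<^sub>m n :: complex mat)"
    then have a: "a < n" and b: "b < n" by auto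
    have "(L * Mq n q g) $$ (a,b) = (\<Sum>i<n. complex_of_real (q a $ i) / g a * (complex_of_real (q b $ i) * g b))"
      using a b unfolding L_def Mq_def by (simp add: scalar_prod_def lessThan_atLeast0)
    also have "\<dots> = g b / g a * (\<Sum>i<n. complex_of_real (q a $ i) * complex_of_real (q b $ i))"
      by (simp add: sum_distrib_left field_simps)
    also have "\<dots> = (1\<^sub>m n :: complex mat) $$ (a,b)"
      using orth_sum_c[OF o a b] a b g by auto
    finally show "(L * Mq n q g) $$ (a,b) = (1\<^sub>m n :: complex mat) $$ (a,b)" .
  qed (auto simp: L_def Mq_def)
  have MLi: "Mq n q g * L = 1\<^sub>m n" by (rule mat_mult_left_right_inverse[OF Lc Mq_carrier LM])
  have U: "Mq n q g \<in> Units (ring_mat TYPE(complex) n undefined)"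
    using Lc LM MLi unfolding Units_def ring_mat_def by auto
  show ?thesis
  proof (cases "mat_inverse (Mq n q g)")
    case None
    have "Mq n q g \<notin> Units (ring_mat TYPE(complex) n undefined)" by (rule mat_inverse(1)[OF Mq_carrier None])
    then show ?thesis using U by blast
  next
    case (Some B) then show ?thesis using mat_inverse(2)[OF Mq_carrier Some] unfolding minv_def by auto
  qed
qed

lemma Mq_vec: assumes "i < n" "z \<in> carrier_vec n" shows "(Mq n q g *\<^sub>v z) $ i = (\<Sum>c<n. complex_of_real (q c $ i) * g c * z $ c)"
  using assms unfolding Mq_def by (auto simp: scalar_prod_def lessThan_atLeast0 intro!: sum.cong)

lemma key:
  assumes o: "orth n q"
  shows "(\<Sum>i<n. cnj (\<Sum>c<n. complex_of_real (q c $ i) * z c) * (\<Sum>c<n. complex_of_real (q c $ i) * w c * z c))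
        = (\<Sum>c<n. w c * cnj (z c) * z c)"
proof -
  define f where "f = (\<lambda>i b a. cnj (z a) * w b * z b * (complex_of_real (q a $ i) * complex_of_real (q b $ i)))"
  have "(\<Sum>i<n. cnj (\<Sum>c<n. complex_of_real (q c $ i) * z c) * (\<Sum>c<n. complex_of_real (q c $ i) * w c * z c))
     = (\<Sum>i<n. \<Sum>b<n. \<Sum>a<n. f i b a)"
    unfolding f_def by (simp add: sum_distrib_left sum_distrib_right mult_ac)
  also have "\<dots> = (\<Sum>b<n. \<Sum>i<n. \<Sum>a<n. f i b a)" by (rule sum.swap)
  also have "\<dots> = (\<Sum>b<n. \<Sum>a<n. \<Sum>i<n. f i b a)" by (rule sum.cong[OF refl], rule sum.swap)
  also have "\<dots> = (\<Sum>b<n. \<Sum>a<n. cnj (z a) * w b * z b * (if a = b then 1 else 0))"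
    unfolding f_def by (intro sum.cong refl, simp add: sum_distrib_left[symmetric] orth_sum_c[OF o])
  also have "\<dots> = (\<Sum>c<n. w c * cnj (z c) * z c)"
    by (simp add: if_distrib mult_ac cong: if_cong)
  finally show ?thesis .
qed


lemma eig_pos:
  assumes es: "ordered_eigensystem n V nu r" and V: "V \<in> carrier_mat n n"
    and j: "j \<in> {1..n}" and lt: "\<forall>k. eigenvalue V k \<longrightarrow> lam < k"
  shows "lam < nu j"
proof -
  have rc: "r j \<in> carrier_vec n" and ev: "V *\<^sub>v r j = nu j \<cdot>\<^sub>v r j" and one: "r j \<bullet> r j = 1"
    using es j unfolding ordered_eigensystem_def by auto
  have "r j \<noteq> 0\<^sub>v n" using one rc by auto
  then have "eigenvector V (r j) (nu j)" unfolding eigenvector_def using rc ev V by auto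
  then show ?thesis using lt unfolding eigenvalue_def by blast
qed

lemma orth_m: assumes es: "ordered_eigensystem n V nu r" shows "orth n (\<lambda>c. r (c+1))"
  using es unfolding ordered_eigensystem_def orth_def by auto

lemma orth_p: assumes es: "ordered_eigensystem n V nu r" shows "orth n (\<lambda>c. r (n - c))"
proof -
  have a: "\<forall>c<n. r (n-c) \<in> carrier_vec n" using es unfolding ordered_eigensystem_def by auto
  have "\<forall>c<n. \<forall>c'<n. r (n-c) \<bullet> r (n-c') = (if n - c = n - c' then 1 else 0)"
    using es unfolding ordered_eigensystem_def by auto
  moreover have "\<And>c c'. c < n \<Longrightarrow> c' < n \<Longrightarrow> (n - c = n - c') = (c = c')" by auto
  ultimately show ?thesis using a unfolding orth_def by auto
qed

theorem lemma4p5: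
  fixes n :: nat and Vp Vm :: "real mat"
    and nup num :: "nat \<Rightarrow> real" and rp rm :: "nat \<Rightarrow> real vec" and lam :: real
  assumes "Vp \<in> carrier_mat n n" and "transpose_mat Vp = Vp"
    and "Vm \<in> carrier_mat n n" and "transpose_mat Vm = Vm"
    and "\<forall>k. eigenvalue Vp k \<longrightarrow> 0 \<le> k"
    and "\<forall>k. eigenvalue Vm k \<longrightarrow> 0 \<le> k"
    and "ordered_eigensystem n Vp nup rp"
    and "ordered_eigensystem n Vm num rm"
    and "\<forall>k. eigenvalue Vp k \<or> eigenvalue Vm k \<longrightarrow> lam < k"
  shows "\<not> eigenvalue (Wtilde_minus n num rm nup rp lam) (-1)"
proof
  assume evW: "eigenvalue (Wtilde_minus n num rm nup rp lam) (-1)"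
  define qm where "qm = (\<lambda>c. rm (c+1))"
  define qp where "qp = (\<lambda>c. rp (n-c))"
  define dm where "dm = (\<lambda>c. sqrt (num (c+1) - lam))"
  define dp where "dp = (\<lambda>c. sqrt (nup (n-c) - lam))"
  have om: "orth n qm" unfolding qm_def by (rule orth_m[OF assms(8)])
  have op: "orth n qp" unfolding qp_def by (rule orth_p[OF assms(7)])
  have dp_pos: "dp c > 0" if "c < n" for c
  proof -
    have "lam < nup (n-c)" using eig_pos[OF assms(7) assms(1), of "n-c" lam] that assms(9) by force
    then show ?thesis unfolding dp_def by auto
  qed
  have lm: "lam \<le> num (Suc c)" if "c < n" for c
    using eig_pos[OF assms(8) assms(3), of "Suc c" lam] that assms(9) by auto
  have lp: "lam \<le> nup (n - c)" if "c < n" for c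
    using eig_pos[OF assms(7) assms(1), of "n - c" lam] that assms(9) by force
  have dm_nn: "dm c \<ge> 0" if "c < n" for c unfolding dm_def using lm[OF that] by auto
  define P where "P = Mq n qm (\<lambda>c. 1 + \<i> * complex_of_real (dm c))"
  define Q where "Q = Mq n qm (\<lambda>c. 1 - \<i> * complex_of_real (dm c))"
  define P' where "P' = Mq n qp (\<lambda>c. 1 + \<i> * complex_of_real (dp c))"
  define Q' where "Q' = Mq n qp (\<lambda>c. 1 - \<i> * complex_of_real (dp c))"
  have eP: "Rminus n rm + \<i> \<cdot>\<^sub>m Sminus n num rm lam = P"
    unfolding P_def Mq_def Rminus_def Sminus_def qm_def dm_def
    by (rule eq_matI) (auto simp: mu_def algebra_simps lm lp)
  have eQ: "Rminus n rm - \<i> \<cdot>\<^sub>m Sminus n num rm lam = Q"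
    unfolding Q_def Mq_def Rminus_def Sminus_def qm_def dm_def
    by (rule eq_matI) (auto simp: mu_def algebra_simps lm lp)
  have eP': "Rplus n rp - \<i> \<cdot>\<^sub>m Splus n nup rp lam = P'"
    unfolding P'_def Mq_def Rplus_def Splus_def qp_def dp_def
    by (rule eq_matI) (auto simp: mu_def algebra_simps lm lp)
  have eQ': "Rplus n rp + \<i> \<cdot>\<^sub>m Splus n nup rp lam = Q'"
    unfolding Q'_def Mq_def Rplus_def Splus_def qp_def dp_def
    by (rule eq_matI) (auto simp: mu_def algebra_simps lm lp)
  have gnz: "1 - \<i> * complex_of_real d \<noteq> 0" for d
  proof
    assume "1 - \<i> * complex_of_real d = 0"
    then have "Re (1 - \<i> * complex_of_real d) = 0" by simp
    then show False by simp
  qed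
  have iQ: "Q * minv Q = 1\<^sub>m n" "minv Q \<in> carrier_mat n n"
    using Mq_inv[OF om, of "\<lambda>c. 1 - \<i> * complex_of_real (dm c)"] gnz unfolding Q_def by auto
  have iQ': "Q' * minv Q' = 1\<^sub>m n" "minv Q' \<in> carrier_mat n n"
    using Mq_inv[OF op, of "\<lambda>c. 1 - \<i> * complex_of_real (dp c)"] gnz unfolding Q'_def by auto
  have cP: "P \<in> carrier_mat n n" "Q \<in> carrier_mat n n" "P' \<in> carrier_mat n n" "Q' \<in> carrier_mat n n"
    unfolding P_def Q_def P'_def Q'_def by auto
  have W: "Wtilde_minus n num rm nup rp lam = - (P * minv Q * P' * minv Q')"
    unfolding Wtilde_minus_def eP eQ eP' eQ' ..
  have dW: "dim_row (Wtilde_minus n num rm nup rp lam) = n" unfolding W using cP by simp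
  obtain x where x: "x \<in> carrier_vec n" "x \<noteq> 0\<^sub>v n"
    and Wx: "Wtilde_minus n num rm nup rp lam *\<^sub>v x = -1 \<cdot>\<^sub>v x"
    using evW unfolding eigenvalue_def eigenvector_def dW by auto
  define y where "y = minv Q' *\<^sub>v x"
  define z where "z = minv Q *\<^sub>v (P' *\<^sub>v y)"
  have yc: "y \<in> carrier_vec n" unfolding y_def using iQ' x by auto
  have zc: "z \<in> carrier_vec n" unfolding z_def using iQ cP yc by auto
  have "Wtilde_minus n num rm nup rp lam *\<^sub>v x = - (P *\<^sub>v z)"
    unfolding W y_def z_def using cP iQ iQ' x
    by (subst uminus_mult_mat_vec) (auto simp: assoc_mult_mat_vec[of _ n n _ n])
  then have Pz: "P *\<^sub>v z = x"
  proof -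
    assume h: "Wtilde_minus n num rm nup rp lam *\<^sub>v x = - (P *\<^sub>v z)"
    show ?thesis
    proof (rule eq_vecI)
      fix i assume "i < dim_vec x"
      then have i: "i < n" using x by simp
      have "(- (P *\<^sub>v z)) $ i = (-1 \<cdot>\<^sub>v x) $ i" using h Wx by simp
      then show "(P *\<^sub>v z) $ i = x $ i" using i cP x by simp
    qed (use cP x in simp)
  qed
  have Qy: "Q' *\<^sub>v y = x" unfolding y_def using iQ' x cP
    by (metis assoc_mult_mat_vec one_mult_mat_vec)
  have Qz: "Q *\<^sub>v z = P' *\<^sub>v y" unfolding z_def using iQ cP yc
    by (metis assoc_mult_mat_vec one_mult_mat_vec mult_mat_vec_carrier)
  define A where "A = (\<lambda>i. \<Sum>c<n. complex_of_real (qm c $ i) * z $ c)"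
  define B where "B = (\<lambda>i. \<Sum>c<n. complex_of_real (qm c $ i) * complex_of_real (dm c) * z $ c)"
  define C where "C = (\<lambda>i. \<Sum>c<n. complex_of_real (qp c $ i) * y $ c)"
  define E where "E = (\<lambda>i. \<Sum>c<n. complex_of_real (qp c $ i) * complex_of_real (dp c) * y $ c)"
  have exp: "(\<Sum>c<n. complex_of_real (q c $ i) * (1 + s * \<i> * complex_of_real (d c)) * v $ c)
     = (\<Sum>c<n. complex_of_real (q c $ i) * v $ c) + s * \<i> * (\<Sum>c<n. complex_of_real (q c $ i) * complex_of_real (d c) * v $ c)"
    for q s d i and v :: "complex vec"
    by (simp add: sum.distrib sum_distrib_left algebra_simps)
  have AC: "A i = C i \<and> B i = - E i" if i: "i < n" for i
  proof -
    have e1: "A i + \<i> * B i = C i - \<i> * E i"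
      using arg_cong[OF Pz[folded Qy], of "\<lambda>v. v $ i"] Mq_vec[OF i zc] Mq_vec[OF i yc]
        exp[of qm i 1 dm z] exp[of qp i "-1" dp y]
      unfolding P_def Q'_def A_def B_def C_def E_def by simp
    have e2: "A i - \<i> * B i = C i + \<i> * E i"
      using arg_cong[OF Qz, of "\<lambda>v. v $ i"] Mq_vec[OF i zc] Mq_vec[OF i yc]
        exp[of qm i "-1" dm z] exp[of qp i 1 dp y]
      unfolding Q_def P'_def A_def B_def C_def E_def by simp
    have s1: "(A i + \<i> * B i) + (A i - \<i> * B i) = (C i - \<i> * E i) + (C i + \<i> * E i)" using e1 e2 by simp
    have s2: "(A i + \<i> * B i) - (A i - \<i> * B i) = (C i - \<i> * E i) - (C i + \<i> * E i)" using e1 e2 by simp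
    from s1 have "A i = C i" by simp
    moreover from s2 have "\<i> * B i = \<i> * (- E i)" by (simp add: algebra_simps)
    then have "B i = - E i" by (simp only: mult_cancel_left) simp
    ultimately show ?thesis by simp
  qed
  have k1: "(\<Sum>i<n. cnj (A i) * B i) = (\<Sum>c<n. complex_of_real (dm c) * cnj (z $ c) * z $ c)"
    unfolding A_def B_def by (rule key[OF om])
  have k2: "(\<Sum>i<n. cnj (C i) * E i) = (\<Sum>c<n. complex_of_real (dp c) * cnj (y $ c) * y $ c)"
    unfolding C_def E_def by (rule key[OF op])
  have "(\<Sum>i<n. cnj (A i) * B i) = - (\<Sum>i<n. cnj (C i) * E i)"
    using AC by (simp add: sum_negf[symmetric])
  then have "(\<Sum>c<n. complex_of_real (dm c * (cmod (z $ c))^2)) + (\<Sum>c<n. complex_of_real (dp c * (cmod (y $ c))^2)) = 0"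
  proof -
    assume h: "(\<Sum>i<n. cnj (A i) * B i) = - (\<Sum>i<n. cnj (C i) * E i)"
    have t1: "complex_of_real (d * (cmod w)^2) = complex_of_real d * cnj w * w" for d w
      by (subst of_real_mult, subst complex_norm_square) (simp add: mult_ac)
    show ?thesis unfolding t1 using h unfolding k1 k2 by simp
  qed
  then have "(\<Sum>c<n. dm c * (cmod (z $ c))^2) + (\<Sum>c<n. dp c * (cmod (y $ c))^2) = 0"
  proof -
    assume h: "(\<Sum>c<n. complex_of_real (dm c * (cmod (z $ c))^2)) + (\<Sum>c<n. complex_of_real (dp c * (cmod (y $ c))^2)) = 0"
    have "complex_of_real ((\<Sum>c<n. dm c * (cmod (z $ c))^2) + (\<Sum>c<n. dp c * (cmod (y $ c))^2)) = 0"
      unfolding of_real_add of_real_sum by (rule h)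
    then show ?thesis by (simp only: of_real_eq_0_iff)
  qed
  moreover have "(\<Sum>c<n. dm c * (cmod (z $ c))^2) \<ge> 0" using dm_nn by (intro sum_nonneg) auto
  moreover have nn: "\<forall>c\<in>{..<n}. dp c * (cmod (y $ c))^2 \<ge> 0" 
  proof
    fix c assume "c \<in> {..<n}"
    then have "dp c \<ge> 0" using dp_pos less_imp_le by auto
    then show "dp c * (cmod (y $ c))^2 \<ge> 0" by simp
  qed
  ultimately have "(\<Sum>c<n. dp c * (cmod (y $ c))^2) = 0"
  proof -
    assume a: "(\<Sum>c<n. dm c * (cmod (z $ c))^2) + (\<Sum>c<n. dp c * (cmod (y $ c))^2) = 0"
      "(\<Sum>c<n. dm c * (cmod (z $ c))^2) \<ge> 0"
    have "(\<Sum>c<n. dp c * (cmod (y $ c))^2) \<ge> 0" using nn by (intro sum_nonneg) auto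
    with a show ?thesis by linarith
  qed
  then have "\<forall>c\<in>{..<n}. dp c * (cmod (y $ c))^2 = 0" 
    using sum_nonneg_eq_0_iff[of "{..<n}" "\<lambda>c. dp c * (cmod (y $ c))^2"] nn by blast
  then have y0: "y $ c = 0" if "c < n" for c using dp_pos[OF that] that by force
  have "x = 0\<^sub>v n"
  proof (rule eq_vecI)
    fix i assume "i < dim_vec (0\<^sub>v n :: complex vec)"
    then have i: "i < n" by simp
    show "x $ i = 0\<^sub>v n $ i" using Mq_vec[OF i yc] Qy y0 i unfolding Q'_def by auto
  qed (use x in auto)
  with x show False by simp
qed

end
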